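(* A semigroup $\langle A;\cdot\rangle$ is an Abelian algebra if and only if $\langle A;\cdot\rangle$ is stationary and for all $a,b,c,d,u,v\in A$ the equality $aub=cud$ implies $avb=cvd$.
   Context: A semigroup $\langle A;\cdot\rangle$ is called stationary if for all $u,v,b,c\in A$, $ub=uc$ implies $vb=vc$, and $bu=cu$ implies $bv=cv$. A polynomial operation of an algebra is an operation obtained from a term by substituting elements of the algebra for some of its variables. An algebra is called Abelian if for every polynomial operation $t(x,y_1,\ldots,y_n)$ and all elements $u,v,c_1,\ldots,c_n,d_1,\ldots,d_n$ of the algebra, $t(u,c_1,\ldots,c_n)=t(u,d_1,\ldots,d_n)$ implies $t(v,c_1,\ldots,c_n)=t(v,d_1,\ldots,d_n)$. (An "Abelian semigroup" means a semigroup that is an Abelian algebra in this sense.) *)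

theory Defs
  imports Main
begin

text \<open>Terms of the semigroup signature with variables (indexed by nat) and
  constants from the algebra; evaluating such a term gives exactly the
  polynomial operations of the semigroup.\<close>
datatype 'a sg_term = Var nat | Const 'a | Mul "'a sg_term" "'a sg_term"

primrec sg_eval :: "'a::semigroup_mult sg_term \<Rightarrow> (nat \<Rightarrow> 'a) \<Rightarrow> 'a" where
  "sg_eval (Var i) e = e i"
| "sg_eval (Const a) e = a"
| "sg_eval (Mul s t) e = sg_eval s e * sg_eval t e"

text \<open>Abelian algebra (term condition for polynomials): variable 0 plays the
  role of x, all other variables the roles of y_1, ..., y_n.\<close>
definition abelian_semigroup :: "'a::semigroup_mult itself \<Rightarrow> bool" where
  "abelian_semigroup _ \<longleftrightarrow>
     (\<forall>(t :: 'a sg_term) (u :: 'a) v (c :: nat \<Rightarrow> 'a) d.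
        sg_eval t (c(0 := u)) = sg_eval t (d(0 := u)) \<longrightarrow>
        sg_eval t (c(0 := v)) = sg_eval t (d(0 := v)))"

definition stationary :: "'a::semigroup_mult itself \<Rightarrow> bool" where
  "stationary _ \<longleftrightarrow>
     (\<forall>(u :: 'a) v b c. (u * b = u * c \<longrightarrow> v * b = v * c) \<and>
                       (b * u = c * u \<longrightarrow> b * v = c * v))"

end

theory Submission
  imports Defs
begin

definition lft :: "'a::semigroup_mult option \<Rightarrow> 'a \<Rightarrow> 'a" where
  "lft L x = (case L of None \<Rightarrow> x | Some l \<Rightarrow> l * x)"

definition ctx :: "'a::semigroup_mult option \<Rightarrow> 'a \<Rightarrow> 'a option \<Rightarrow> 'a" where
  "ctx L x R = (case R of None \<Rightarrow> lft L x | Some r \<Rightarrow> lft L x * r)"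

lemma ctx_split1: "ctx L (x*y) R = ctx L x (Some (ctx None y R))"
  by (cases L; cases R) (auto simp: ctx_def lft_def mult.assoc)

lemma ctx_split2: "ctx L (x*y) R = ctx (Some (ctx L x None)) y R"
  by (cases L; cases R) (auto simp: ctx_def lft_def mult.assoc)

lemma base:
  fixes u v :: "'a::semigroup_mult"
  assumes s1: "\<And>u v b c::'a. u*b=u*c \<Longrightarrow> v*b=v*c" and s2: "\<And>u v b c::'a. b*u=c*u \<Longrightarrow> b*v=c*v"
    and a1: "\<And>a b c d u v :: 'a. a * u * b = c * u * d \<Longrightarrow> a * v * b = c * v * d"
    and "(L=None) = (L'=None)" "(R=None) = (R'=None)" and e: "ctx L u R = ctx L' u R'"
  shows "ctx L v R = ctx L' v R'"
  using assms(4,5) e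
  apply (cases L; cases L'; cases R; cases R'; simp add: ctx_def lft_def)
  using s1 s2 a1 by blast+

lemma key:
  fixes t :: "'a::semigroup_mult sg_term"
  assumes st: "stationary TYPE('a)"
    and ab: "\<forall>a b c d u v :: 'a. a * u * b = c * u * d \<longrightarrow> a * v * b = c * v * d"
  shows "\<And>L L' R R'. (L=None) = (L'=None) \<Longrightarrow> (R=None) = (R'=None) \<Longrightarrow>
    ctx L (sg_eval t (c(0:=u))) R = ctx L' (sg_eval t (d(0:=u))) R' \<Longrightarrow>
    ctx L (sg_eval t (c(0:=v))) R = ctx L' (sg_eval t (d(0:=v))) R'"
proof (induction t)
  case (Var n)
  show ?case
  proof (cases "n = 0")
    case True
    have s1: "\<And>u v b c::'a. u*b=u*c \<Longrightarrow> v*b=v*c" and s2: "\<And>u v b c::'a. b*u=c*u \<Longrightarrow> b*v=c*v"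
      using st unfolding stationary_def by blast+
    have a1: "\<And>a b c d u v :: 'a. a * u * b = c * u * d \<Longrightarrow> a * v * b = c * v * d"
      using ab by blast
    from Var.prems(3) True have eq: "ctx L u R = ctx L' u R'" by simp
    have "ctx L v R = ctx L' v R'"
      by (rule base[OF s1 s2 a1 Var.prems(1,2) eq])
    with True show ?thesis by simp
  next
    case False
    with Var.prems(3) show ?thesis by simp
  qed
next
  case (Const x)
  then show ?case by (simp only: sg_eval.simps)
next
  case (Mul s t)
  let ?Su = "sg_eval s (c(0:=u))" and ?Sv = "sg_eval s (c(0:=v))"
  let ?Su' = "sg_eval s (d(0:=u))" and ?Sv' = "sg_eval s (d(0:=v))"
  let ?Tu = "sg_eval t (c(0:=u))" and ?Tv = "sg_eval t (c(0:=v))"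
  let ?Tu' = "sg_eval t (d(0:=u))" and ?Tv' = "sg_eval t (d(0:=v))"
  have p: "ctx L (?Su * ?Tu) R = ctx L' (?Su' * ?Tu') R'" using Mul.prems(3) by (simp only: sg_eval.simps)
  have "ctx L ?Su (Some (ctx None ?Tu R)) = ctx L' ?Su' (Some (ctx None ?Tu' R'))"
    using p by (simp only: ctx_split1)
  then have "ctx L ?Sv (Some (ctx None ?Tu R)) = ctx L' ?Sv' (Some (ctx None ?Tu' R'))"
    using Mul.IH(1) Mul.prems(1) by blast
  then have "ctx L (?Sv * ?Tu) R = ctx L' (?Sv' * ?Tu') R'"
    by (simp only: ctx_split1)
  then have "ctx (Some (ctx L ?Sv None)) ?Tu R = ctx (Some (ctx L' ?Sv' None)) ?Tu' R'"
    by (simp only: ctx_split2)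
  then have "ctx (Some (ctx L ?Sv None)) ?Tv R = ctx (Some (ctx L' ?Sv' None)) ?Tv' R'"
    using Mul.IH(2) Mul.prems(2) by blast
  then have "ctx L (?Sv * ?Tv) R = ctx L' (?Sv' * ?Tv') R'"
    by (simp only: ctx_split2)
  then show ?case by (simp only: sg_eval.simps)
qed

theorem mainTheorem10:
  shows "abelian_semigroup TYPE('a::semigroup_mult) \<longleftrightarrow>
    (stationary TYPE('a) \<and>
     (\<forall>a b c d u v :: 'a. a * u * b = c * u * d \<longrightarrow> a * v * b = c * v * d))"
proof
  assume A: "abelian_semigroup TYPE('a::semigroup_mult)"
  have T: "\<And>(t :: 'a sg_term) (u :: 'a) v (c :: nat \<Rightarrow> 'a) d.
        sg_eval t (c(0 := u)) = sg_eval t (d(0 := u)) \<Longrightarrow>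
        sg_eval t (c(0 := v)) = sg_eval t (d(0 := v))"
    using A unfolding abelian_semigroup_def by blast
  have S: "stationary TYPE('a)"
    unfolding stationary_def
  proof (intro allI conjI impI)
    fix u v b c :: 'a
    assume "u * b = u * c"
    then show "v * b = v * c"
      using T[of "Mul (Var 0) (Var 1)" "\<lambda>_. b" u "\<lambda>_. c" v] by simp
  next
    fix u v b c :: 'a
    assume "b * u = c * u"
    then show "b * v = c * v"
      using T[of "Mul (Var 1) (Var 0)" "\<lambda>_. b" u "\<lambda>_. c" v] by simp
  qed
  have "\<forall>a b c d u v :: 'a. a * u * b = c * u * d \<longrightarrow> a * v * b = c * v * d"
  proof (intro allI impI)
    fix a b c d u v :: 'a
    assume "a * u * b = c * u * d"
    then show "a * v * b = c * v * d"
      using T[of "Mul (Mul (Var 1) (Var 0)) (Var 2)" "\<lambda>i. if i = 1 then a else b" u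
          "\<lambda>i. if i = 1 then c else d" v] by simp
  qed
  with S show "stationary TYPE('a) \<and>
     (\<forall>a b c d u v :: 'a. a * u * b = c * u * d \<longrightarrow> a * v * b = c * v * d)" by blast
next
  assume H: "stationary TYPE('a) \<and>
     (\<forall>a b c d u v :: 'a. a * u * b = c * u * d \<longrightarrow> a * v * b = c * v * d)"
  show "abelian_semigroup TYPE('a::semigroup_mult)"
    unfolding abelian_semigroup_def
  proof (intro allI impI)
    fix t :: "'a sg_term" and u v :: 'a and c d :: "nat \<Rightarrow> 'a"
    assume e: "sg_eval t (c(0 := u)) = sg_eval t (d(0 := u))"
    have "ctx None (sg_eval t (c(0 := v))) None = ctx None (sg_eval t (d(0 := v))) None"
      by (rule key[OF conjunct1[OF H] conjunct2[OF H], where u=u]) (auto simp: ctx_def lft_def e)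
    then show "sg_eval t (c(0 := v)) = sg_eval t (d(0 := v))"
      by (simp add: ctx_def lft_def)
  qed
qed

end
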